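(* Let $A\in gl(n,\mathbb{C})$ be nilpotent of index $m\ge2$ (i.e. $A^m=0\ne A^{m-1}$), let $L:\mathbb{C}^n\to\mathbb{C}^n$ be the linear map it represents, $K_j=\ker L^j$ for $j=0,\dots,m$, $K_{-1}=\{0\}$, $U_j=K_j\cap K_{j-1}^{\perp}$ and $r_j=\dim U_j$ for $j=1,\dots,m$. Then for every $j\in\{1,\dots,m\}$ there exists an orthonormal basis $\{u^j_1,\dots,u^j_{r_j}\}$ of $U_j$ such that for all $j\ge2$ and all $k\in\{1,\dots,r_j\}$, $$Lu^j_k\in\mathrm{Span}(u^{j-1}_1,\dots,u^{j-1}_k)\oplus^\perp K_{j-2}\quad\text{and}\quad\langle Lu^j_k,u^{j-1}_k\rangle\ne0.$$
   Context: $\mathbb{C}^n$ carries the standard Hermitian inner product $\langle\cdot,\cdot\rangle$; $\perp$ denotes orthogonal complement and $\oplus^\perp$ an orthogonal direct sum. *)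

theory Defs
  imports "HOL-Analysis.Analysis"
begin

primrec matpow :: "'a::comm_ring_1 ^'n ^'n \<Rightarrow> nat \<Rightarrow> 'a ^'n ^'n" where
  "matpow A 0 = mat 1"
| "matpow A (Suc k) = A ** matpow A k"

definition cinner :: "complex ^'n \<Rightarrow> complex ^'n \<Rightarrow> complex" where
  "cinner x y = (\<Sum>i\<in>UNIV. x $ i * cnj (y $ i))"

definition corth :: "(complex ^'n) set \<Rightarrow> (complex ^'n) set" where
  "corth S = {x. \<forall>y\<in>S. cinner x y = 0}"

definition kerpow :: "complex ^'n ^'n \<Rightarrow> nat \<Rightarrow> (complex ^'n) set" where
  "kerpow A j = {x. matpow A j *v x = 0}"

definition Uspace :: "complex ^'n ^'n \<Rightarrow> nat \<Rightarrow> (complex ^'n) set" where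
  "Uspace A j = kerpow A j \<inter> corth (kerpow A (j - 1))"

definition orth_sum :: "(complex ^'n) set \<Rightarrow> (complex ^'n) set \<Rightarrow> (complex ^'n) set" where
  "orth_sum S T = {a + b | a b. a \<in> S \<and> b \<in> T}"

end

theory Submission
  imports Defs
begin

lemma cinner_add_left: "cinner (x + y) z = cinner x z + cinner y z"
  by (simp add: cinner_def distrib_right sum.distrib)
lemma cinner_add_right: "cinner z (x + y) = cinner z x + cinner z y"
  by (simp add: cinner_def distrib_left sum.distrib)
lemma cinner_diff_left: "cinner (x - y) z = cinner x z - cinner y z"
  by (simp add: cinner_def left_diff_distrib sum_subtractf)
lemma cinner_diff_right: "cinner z (x - y) = cinner z x - cinner z y"
  by (simp add: cinner_def right_diff_distrib sum_subtractf)
lemma cinner_scale_left: "cinner (c *s x) z = c * cinner x z"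
  by (simp add: cinner_def sum_distrib_left mult.assoc)
lemma cinner_scale_right: "cinner z (c *s x) = cnj c * cinner z x"
  by (simp add: cinner_def sum_distrib_left algebra_simps)
lemma cinner_zero_left[simp]: "cinner 0 z = 0"
  by (simp add: cinner_def)
lemma cinner_zero_right[simp]: "cinner z 0 = 0"
  by (simp add: cinner_def)
lemma cinner_cnj: "cinner x y = cnj (cinner y x)"
  by (simp add: cinner_def mult.commute)
lemma cinner_sum_left: "finite I \<Longrightarrow> cinner (\<Sum>i\<in>I. f i) z = (\<Sum>i\<in>I. cinner (f i) z)"
  by (induct I rule: finite_induct) (simp_all add: cinner_add_left)
lemma cinner_self: "cinner x x = of_real (\<Sum>i\<in>UNIV. (cmod (x $ i))^2)"
  unfolding cinner_def of_real_sum by (rule sum.cong) (auto simp: complex_norm_square[symmetric] simp del: of_real_power)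
lemma cinner_self_eq_0: "cinner x x = 0 \<longleftrightarrow> x = 0"
proof
  assume "cinner x x = 0"
  then have "(\<Sum>i\<in>UNIV. (cmod (x $ i))^2) = 0" by (simp only: cinner_self of_real_eq_0_iff)
  then have "\<forall>i\<in>UNIV. (cmod (x $ i))^2 = 0"
    by (subst sum_nonneg_eq_0_iff[symmetric]) auto
  then show "x = 0" by (simp add: vec_eq_iff)
qed simp
lemma cinner_self_real: "cinner x x = of_real (Re (cinner x x))"
  by (simp add: cinner_self)
lemma cinner_self_pos: "x \<noteq> 0 \<Longrightarrow> Re (cinner x x) > 0"
proof -
  assume "x \<noteq> 0"
  then have "cinner x x \<noteq> 0" by (simp add: cinner_self_eq_0)
  moreover have "Re (cinner x x) \<ge> 0" by (simp add: cinner_self sum_nonneg)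
  ultimately show ?thesis using cinner_self_real[of x] by (metis less_eq_real_def of_real_0)
qed
definition onb :: "(nat \<Rightarrow> complex^'n) \<Rightarrow> nat \<Rightarrow> bool" where
  "onb v r \<longleftrightarrow> (\<forall>k\<in>{1..r}. \<forall>l\<in>{1..r}. cinner (v k) (v l) = (if k = l then 1 else 0))"

lemma subspace_orth_left: "vec.subspace {y. cinner y z = 0}"
  unfolding vec.subspace_def by (simp add: cinner_add_left cinner_scale_left)
lemma subspace_orth_right: "vec.subspace {y. cinner z y = 0}"
  unfolding vec.subspace_def by (simp add: cinner_add_right cinner_scale_right)

lemma span_orth_left: "(\<And>y. y \<in> X \<Longrightarrow> cinner y z = 0) \<Longrightarrow> y \<in> vec.span X \<Longrightarrow> cinner y z = 0"
proof -
  assume a: "\<And>y. y \<in> X \<Longrightarrow> cinner y z = 0" "y \<in> vec.span X"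
  have "vec.span X \<subseteq> {y. cinner y z = 0}"
    by (rule vec.span_minimal[OF _ subspace_orth_left]) (use a in auto)
  then show ?thesis using a by auto
qed
lemma span_orth_right: "(\<And>y. y \<in> X \<Longrightarrow> cinner z y = 0) \<Longrightarrow> y \<in> vec.span X \<Longrightarrow> cinner z y = 0"
proof -
  assume a: "\<And>y. y \<in> X \<Longrightarrow> cinner z y = 0" "y \<in> vec.span X"
  have "vec.span X \<subseteq> {y. cinner z y = 0}"
    by (rule vec.span_minimal[OF _ subspace_orth_right]) (use a in auto)
  then show ?thesis using a by auto
qed

lemma onb_inj: "onb v r \<Longrightarrow> inj_on v {1..r}"
proof (rule inj_onI)
  fix k l assume o: "onb v r" and kl: "k \<in> {1..r}" "l \<in> {1..r}" "v k = v l"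
  have "cinner (v k) (v k) = 1" using o kl(1) unfolding onb_def by auto
  then have "cinner (v k) (v l) = 1" using kl(3) by simp
  moreover have "k \<noteq> l \<Longrightarrow> cinner (v k) (v l) = 0" using o kl(1,2) unfolding onb_def by auto
  ultimately show "k = l" by auto
qed

lemma onb_notin_span: "onb v r \<Longrightarrow> k \<in> {1..r} \<Longrightarrow> v k \<notin> vec.span (v ` ({1..r} - {k}))"
proof
  assume o: "onb v r" and k: "k \<in> {1..r}" and "v k \<in> vec.span (v ` ({1..r} - {k}))"
  have "cinner (v k) (v k) = 0"
  proof (rule span_orth_left[of "v ` ({1..r} - {k})"])
    fix y assume "y \<in> v ` ({1..r} - {k})"
    then obtain l where l: "l \<in> {1..r}" "l \<noteq> k" "y = v l" by blast
    have "cinner (v l) (v k) = 0" using o k l(1,2) unfolding onb_def by simp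
    then show "cinner y (v k) = 0" using l(3) by simp
  qed fact
  moreover have "cinner (v k) (v k) = 1" using o k unfolding onb_def by simp
  ultimately show False by simp
qed

lemma onb_independent: "onb v r \<Longrightarrow> vec.independent (v ` {1..r})"
proof -
  assume o: "onb v r"
  have "v ` {1..r} - {v k} = v ` ({1..r} - {k})" if "k \<in> {1..r}" for k
    using inj_on_image_set_diff[OF onb_inj[OF o], of "{1..r}" "{k}"] that by simp
  then show ?thesis unfolding vec.dependent_def using onb_notin_span[OF o] by force
qed

lemma onb_card: "onb v r \<Longrightarrow> card (v ` {1..r}) = r"
  by (drule onb_inj) (simp add: card_image)

lemma onb_le_dim: "onb v r \<Longrightarrow> v ` {1..r} \<subseteq> W \<Longrightarrow> r \<le> vec.dim W"
proof -
  assume a: "onb v r" "v ` {1..r} \<subseteq> W"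
  have "card (v ` {1..r}) \<le> vec.dim W"
    using vec.independent_card_le_dim[of "v ` {1..r}" W, OF a(2) onb_independent[OF a(1)]] .
  then show ?thesis using onb_card[OF a(1)] by simp
qed

lemma onb_span_dim: "onb v r \<Longrightarrow> v ` {1..r} \<subseteq> W \<Longrightarrow> r = vec.dim W \<Longrightarrow> vec.subspace W
   \<Longrightarrow> vec.span (v ` {1..r}) = W"
proof (rule subset_antisym)
  assume a: "onb v r" "v ` {1..r} \<subseteq> W" "r = vec.dim W" "vec.subspace W"
  show "vec.span (v ` {1..r}) \<subseteq> W" using a vec.span_minimal by blast
  have "card (v ` {1..r}) = vec.dim W" using a onb_card by simp
  then show "W \<subseteq> vec.span (v ` {1..r})"
    using vec.card_eq_dim[of "v ` {1..r}" W] onb_independent[OF a(1)] a(2) by simp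
qed
lemma upd_image: "(v(Suc r := e)) ` {1..Suc r} = insert e (v ` {1..r})"
proof -
  have "{1..Suc r} = insert (Suc r) {1..r}" by auto
  moreover have "(v(Suc r := e)) ` {1..r} = v ` {1..r}" by (rule image_cong) auto
  ultimately show ?thesis by (simp only: image_insert fun_upd_same)
qed

lemma span_insert_mono:
  assumes "a \<in> vec.span (insert b S)" "b \<in> vec.span (insert a S)"
  shows "vec.span (insert a S) = vec.span (insert b S)"
proof (rule subset_antisym)
  show "vec.span (insert a S) \<subseteq> vec.span (insert b S)"
    by (rule vec.span_minimal[OF _ vec.subspace_span])
       (use assms(1) vec.span_superset[of "insert b S"] in auto)
  show "vec.span (insert b S) \<subseteq> vec.span (insert a S)"
    by (rule vec.span_minimal[OF _ vec.subspace_span])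
       (use assms(2) vec.span_superset[of "insert a S"] in auto)
qed

lemma gs_step:
  assumes o: "onb v r" and x: "x \<notin> vec.span (v ` {1..r})"
  shows "\<exists>e. onb (v(Suc r := e)) (Suc r)
           \<and> vec.span (insert e (v ` {1..r})) = vec.span (insert x (v ` {1..r}))
           \<and> cinner x e \<noteq> 0"
proof -
  define V where "V = v ` {1..r}"
  define s where "s = (\<Sum>i\<in>{1..r}. cinner x (v i) *s v i)"
  define y where "y = x - s"
  have sV: "s \<in> vec.span V" unfolding s_def V_def
    by (intro vec.span_sum vec.span_scale vec.span_base) auto
  have y0: "y \<noteq> 0"
  proof
    assume "y = 0" then have "x = s" unfolding y_def by simp
    with sV x show False unfolding V_def by simp
  qed
  have yorth: "cinner y (v l) = 0" if l: "l \<in> {1..r}" for l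
  proof -
    have "cinner s (v l) = (\<Sum>i\<in>{1..r}. cinner x (v i) * cinner (v i) (v l))"
      unfolding s_def by (simp add: cinner_sum_left cinner_scale_left)
    also have "\<dots> = (\<Sum>i\<in>{1..r}. if i = l then cinner x (v i) else 0)"
      by (rule sum.cong) (use o l in \<open>auto simp: onb_def\<close>)
    also have "\<dots> = cinner x (v l)" using l by simp
    finally show ?thesis unfolding y_def by (simp add: cinner_diff_left)
  qed
  define n where "n = sqrt (Re (cinner y y))"
  have npos: "n > 0" unfolding n_def using cinner_self_pos[OF y0] by simp
  have yy: "cinner y y = of_real (n^2)"
    unfolding n_def using cinner_self_pos[OF y0] cinner_self_real[of y] by simp
  define e where "e = (1 / complex_of_real n) *s y"
  have ee: "cinner e e = 1"
    unfolding e_def using npos by (simp add: cinner_scale_left cinner_scale_right yy power2_eq_square)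
  have eorth: "cinner e (v l) = 0" if "l \<in> {1..r}" for l
    unfolding e_def using yorth[OF that] by (simp add: cinner_scale_left)
  have eorth2: "cinner (v l) e = 0" if "l \<in> {1..r}" for l
    using eorth[OF that] cinner_cnj[of "v l" e] by simp
  have onb': "onb (v(Suc r := e)) (Suc r)"
    unfolding onb_def
  proof (intro ballI)
    fix k l assume k: "k \<in> {1..Suc r}" and l: "l \<in> {1..Suc r}"
    show "cinner ((v(Suc r := e)) k) ((v(Suc r := e)) l) = (if k = l then 1 else 0)"
    proof (cases "k = Suc r")
      case True
      then show ?thesis
        using l ee eorth by (cases "l = Suc r") auto
    next
      case False
      then have k': "k \<in> {1..r}" using k by auto
      then show ?thesis
        using l o eorth2 False by (cases "l = Suc r") (auto simp: onb_def)
    qed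
  qed
  have se: "cinner s e = 0"
    by (rule span_orth_left[OF _ sV]) (auto simp: V_def eorth2)
  have "cinner y e = complex_of_real n"
    unfolding e_def using npos by (simp add: cinner_scale_right yy power2_eq_square)
  then have xe: "cinner x e \<noteq> 0"
    using npos se unfolding y_def by (simp add: cinner_diff_left)
  have "e \<in> vec.span (insert x V)"
  proof -
    have "x \<in> vec.span (insert x V)" by (simp add: vec.span_base)
    moreover have "s \<in> vec.span (insert x V)" using sV vec.span_mono[of V "insert x V"] by auto
    ultimately show ?thesis unfolding e_def y_def by (intro vec.span_scale vec.span_diff)
  qed
  moreover have "x \<in> vec.span (insert e V)"
  proof -
    have "x = complex_of_real n *s e + s"
      unfolding e_def y_def using npos by (simp add: vec.scale_scale)
    moreover have "e \<in> vec.span (insert e V)" by (simp add: vec.span_base)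
    moreover have "s \<in> vec.span (insert e V)" using sV vec.span_mono[of V "insert e V"] by auto
    ultimately show ?thesis by (metis vec.span_add vec.span_scale)
  qed
  ultimately have "vec.span (insert e V) = vec.span (insert x V)"
    by (rule span_insert_mono)
  then show ?thesis using onb' xe unfolding V_def by blast
qed
lemma span_insert_cong: "vec.span A = vec.span B \<Longrightarrow> vec.span (insert x A) = vec.span (insert x B)"
  by (simp add: vec.span_insert)

lemma gs_prefix:
  "(\<forall>k\<in>{1..r}. w k \<notin> vec.span (w ` {1..<k})) \<Longrightarrow>
   \<exists>v. onb v r \<and> (\<forall>k\<le>r. vec.span (v ` {1..k}) = vec.span (w ` {1..k}))
       \<and> (\<forall>k\<in>{1..r}. cinner (w k) (v k) \<noteq> 0)"
proof (induction r)
  case 0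
  show ?case by (rule exI[of _ "\<lambda>_. 0"]) (auto simp: onb_def)
next
  case (Suc r)
  then obtain v where o: "onb v r" and sp: "\<forall>k\<le>r. vec.span (v ` {1..k}) = vec.span (w ` {1..k})"
    and ci: "\<forall>k\<in>{1..r}. cinner (w k) (v k) \<noteq> 0" by auto
  have "{1..<Suc r} = {1..r}" by auto
  moreover have "w (Suc r) \<notin> vec.span (w ` {1..<Suc r})" using Suc.prems by simp
  ultimately have "w (Suc r) \<notin> vec.span (w ` {1..r})" by simp
  then have "w (Suc r) \<notin> vec.span (v ` {1..r})" using sp by simp
  from gs_step[OF o this] obtain e where o': "onb (v(Suc r := e)) (Suc r)"
    and sp': "vec.span (insert e (v ` {1..r})) = vec.span (insert (w (Suc r)) (v ` {1..r}))"
    and ce: "cinner (w (Suc r)) e \<noteq> 0" by blast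
  have "vec.span ((v(Suc r := e)) ` {1..k}) = vec.span (w ` {1..k})" if k: "k \<le> Suc r" for k
  proof (cases "k = Suc r")
    case True
    have "vec.span ((v(Suc r := e)) ` {1..k}) = vec.span (insert (w (Suc r)) (v ` {1..r}))"
      unfolding True upd_image using sp' by simp
    also have "\<dots> = vec.span (insert (w (Suc r)) (w ` {1..r}))"
      by (rule span_insert_cong) (use sp in simp)
    also have "insert (w (Suc r)) (w ` {1..r}) = w ` {1..k}"
      using True by (auto simp: atLeastAtMostSuc_conv)
    finally show ?thesis .
  next
    case False
    then have "(v(Suc r := e)) ` {1..k} = v ` {1..k}" using k by (intro image_cong) auto
    then show ?thesis using sp k False by simp
  qed
  moreover have "cinner (w k) ((v(Suc r := e)) k) \<noteq> 0" if "k \<in> {1..Suc r}" for k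
    using that ci ce by (cases "k = Suc r") auto
  ultimately show ?case using o' by blast
qed

lemma onb_extend:
  "vec.subspace W \<Longrightarrow> onb v r \<Longrightarrow> v ` {1..r} \<subseteq> W \<Longrightarrow>
   \<exists>v'. (\<forall>i\<in>{1..r}. v' i = v i) \<and> onb v' (vec.dim W) \<and> vec.span (v' ` {1..vec.dim W}) = W"
proof (induction "vec.dim W - r" arbitrary: v r)
  case 0
  then have "r = vec.dim W" using onb_le_dim[of v r W] by simp
  then show ?case using 0 onb_span_dim[of v r W] by auto
next
  case (Suc d)
  have VW: "vec.span (v ` {1..r}) \<subseteq> W" by (rule vec.span_minimal) (use Suc.prems in auto)
  have "vec.span (v ` {1..r}) \<noteq> W"
  proof
    assume "vec.span (v ` {1..r}) = W"
    then have "vec.dim W = r"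
      using vec.indep_card_eq_dim_span[OF onb_independent[OF Suc.prems(2)]] onb_card[OF Suc.prems(2)]
      by simp
    with Suc.hyps(2) show False by simp
  qed
  with VW obtain x where x: "x \<in> W" "x \<notin> vec.span (v ` {1..r})" by blast
  from gs_step[OF Suc.prems(2) x(2)] obtain e where o': "onb (v(Suc r := e)) (Suc r)"
    and sp': "vec.span (insert e (v ` {1..r})) = vec.span (insert x (v ` {1..r}))" by blast
  have "vec.span (insert x (v ` {1..r})) \<subseteq> W"
    by (rule vec.span_minimal) (use Suc.prems x in auto)
  then have "e \<in> W" using sp' vec.span_base[of e "insert e (v ` {1..r})"] by auto
  then have sub: "(v(Suc r := e)) ` {1..Suc r} \<subseteq> W" unfolding upd_image using Suc.prems(3) by simp
  have "d = vec.dim W - Suc r" using Suc.hyps(2) by simp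
  from Suc.hyps(1)[OF this Suc.prems(1) o' sub] obtain v' where
    "\<forall>i\<in>{1..Suc r}. v' i = (v(Suc r := e)) i" "onb v' (vec.dim W)" "vec.span (v' ` {1..vec.dim W}) = W"
    by blast
  then show ?case by (intro exI[of _ v']) auto
qed
lemma proj_exists:
  assumes S: "vec.subspace S"
  shows "\<exists>P. (\<forall>x y. P (x + y) = P x + P y) \<and> (\<forall>c x. P (c *s x) = c *s P x)
           \<and> (\<forall>x. P x \<in> S \<and> x - P x \<in> corth S)"
proof -
  have "onb (\<lambda>_. 0) 0" by (simp add: onb_def)
  from onb_extend[OF S this] obtain e where o: "onb e (vec.dim S)"
    and sp: "vec.span (e ` {1..vec.dim S}) = S" by auto
  define d where "d = vec.dim S"
  define P where "P x = (\<Sum>i\<in>{1..d}. cinner x (e i) *s e i)" for x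
  have add: "P (x+y) = P x + P y" for x y
    unfolding P_def by (simp add: cinner_add_left vec.scale_left_distrib sum.distrib)
  have scl: "P (c *s x) = c *s P x" for c x
    unfolding P_def by (simp add: cinner_scale_left vec.scale_sum_right vec.scale_scale)
  have inS: "P x \<in> S" for x
  proof -
    have "P x \<in> vec.span (e ` {1..d})" unfolding P_def
      by (intro vec.span_sum vec.span_scale vec.span_base) auto
    then show ?thesis using sp d_def by simp
  qed
  have orth: "x - P x \<in> corth S" for x
    unfolding corth_def
  proof (intro CollectI ballI)
    fix y assume "y \<in> S"
    then have y: "y \<in> vec.span (e ` {1..d})" using sp d_def by simp
    show "cinner (x - P x) y = 0"
    proof (rule span_orth_right[OF _ y])
      fix z assume "z \<in> e ` {1..d}"
      then obtain l where l: "l \<in> {1..d}" "z = e l" by blast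
      have "cinner (P x) (e l) = (\<Sum>i\<in>{1..d}. cinner x (e i) * cinner (e i) (e l))"
        unfolding P_def by (simp add: cinner_sum_left cinner_scale_left)
      also have "\<dots> = (\<Sum>i\<in>{1..d}. if i = l then cinner x (e i) else 0)"
        by (rule sum.cong) (use o l in \<open>auto simp: onb_def d_def\<close>)
      also have "\<dots> = cinner x (e l)" using l by simp
      finally show "cinner (x - P x) z = 0" using l by (simp add: cinner_diff_left)
    qed
  qed
  show ?thesis using add scl inS orth by blast
qed

lemma matpow_Suc': "matpow A (Suc k) = matpow A k ** A"
  by (induct k) (simp_all add: matrix_mul_assoc)

lemma matpow_vec: "matpow A (Suc k) *v x = matpow A k *v (A *v x)"
  by (simp only: matpow_Suc' matrix_vector_mul_assoc)

lemma kerpow_subspace: "vec.subspace (kerpow A j)"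
  unfolding vec.subspace_def kerpow_def by (simp add: matrix_vector_right_distrib vector_scalar_commute)

lemma corth_subspace: "vec.subspace (corth S)"
  unfolding vec.subspace_def corth_def by (simp add: cinner_add_left cinner_scale_left)

lemma Uspace_subspace: "vec.subspace (Uspace A j)"
  unfolding Uspace_def by (intro vec.subspace_inter kerpow_subspace corth_subspace)

lemma kerpow_mono: "x \<in> kerpow A i \<Longrightarrow> x \<in> kerpow A (Suc i)"
  unfolding kerpow_def by (simp add: matrix_vector_mul_assoc[symmetric])

lemma kerpow_le: "i \<le> j \<Longrightarrow> x \<in> kerpow A i \<Longrightarrow> x \<in> kerpow A j"
  by (induct j) (auto simp: le_Suc_eq intro: kerpow_mono)

lemma A_U: "1 \<le> j \<Longrightarrow> x \<in> kerpow A j \<Longrightarrow> A *v x \<in> kerpow A (j - 1)"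
  unfolding kerpow_def using matpow_vec[of A "j-1" x] by simp

lemma key_zero:
  assumes "2 \<le> j" "x \<in> Uspace A j" "A *v x \<in> kerpow A (j - 2)"
  shows "x = 0"
proof -
  have "Suc (j - 2) = j - 1" using assms(1) by simp
  then have "x \<in> kerpow A (j - 1)" using assms(3) matpow_vec[of A "j-2" x] unfolding kerpow_def by simp
  moreover have "x \<in> corth (kerpow A (j - 1))" using assms(2) unfolding Uspace_def by simp
  ultimately have "cinner x x = 0" unfolding corth_def by simp
  then show ?thesis by (simp add: cinner_self_eq_0)
qed
theorem proposition4:
  fixes A :: "complex ^'n ^'n" and m :: nat
  assumes "m \<ge> 2"
    and "matpow A m = 0" and "matpow A (m - 1) \<noteq> 0"
  shows "\<exists>u :: nat \<Rightarrow> nat \<Rightarrow> complex ^'n.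
           (\<forall>j\<in>{1..m}.
              (\<forall>k\<in>{1..vec.dim (Uspace A j)}. \<forall>l\<in>{1..vec.dim (Uspace A j)}.
                  cinner (u j k) (u j l) = (if k = l then 1 else 0))
            \<and> vec.span (u j ` {1..vec.dim (Uspace A j)}) = Uspace A j)
         \<and> (\<forall>j\<in>{2..m}. \<forall>k\<in>{1..vec.dim (Uspace A j)}.
              k \<le> vec.dim (Uspace A (j - 1))
            \<and> A *v u j k \<in> orth_sum (vec.span (u (j - 1) ` {1..k})) (kerpow A (j - 2))
            \<and> cinner (A *v u j k) (u (j - 1) k) \<noteq> 0)"
proof -
  define d where "d j = vec.dim (Uspace A j)" for j
  define Q where "Q j0 u \<longleftrightarrow>
     (\<forall>j\<in>{j0..m}. onb (u j) (d j) \<and> vec.span (u j ` {1..d j}) = Uspace A j)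
   \<and> (\<forall>j\<in>{Suc j0..m}. \<forall>k\<in>{1..d j}. k \<le> d (j - 1)
        \<and> A *v u j k \<in> orth_sum (vec.span (u (j - 1) ` {1..k})) (kerpow A (j - 2))
        \<and> cinner (A *v u j k) (u (j - 1) k) \<noteq> 0)" for j0 u
  have main: "t < m \<Longrightarrow> \<exists>u. Q (m - t) u" for t
  proof (induction t)
    case 0
    have "onb (\<lambda>_. 0) 0" by (simp add: onb_def)
    from onb_extend[OF Uspace_subspace[of A m] this] obtain v where
      "onb v (d m)" "vec.span (v ` {1..d m}) = Uspace A m" unfolding d_def by auto
    then have "Q m (\<lambda>_. v)" unfolding Q_def by auto
    then show ?case by auto
  next
    case (Suc t)
    define j0 where "j0 = m - t"
    have j0: "2 \<le> j0" "j0 \<le> m" using Suc.prems j0_def by auto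
    define j1 where "j1 = j0 - 1"
    have mj1: "m - Suc t = j1" using j0_def j1_def Suc.prems by auto
    have j1j0: "j1 - 1 = j0 - 2" "Suc j1 = j0" using j1_def j0 by auto
    from Suc.IH Suc.prems obtain u where Qu: "Q j0 u" unfolding j0_def by auto
    define r where "r = d j0"
    define ub where "ub = u j0"
    have ob: "onb ub r" and spb: "vec.span (ub ` {1..r}) = Uspace A j0"
      using Qu j0 unfolding Q_def r_def ub_def by auto
    have ubU: "ub ` {1..r} \<subseteq> Uspace A j0"
      using spb vec.span_superset[of "ub ` {1..r}"] by simp
    obtain P where Padd: "\<And>x y. P (x + y) = P x + P y" and Pscl: "\<And>c x. P (c *s x) = c *s P x"
      and PS: "\<And>x. P x \<in> kerpow A (j0 - 2)" and Porth: "\<And>x. x - P x \<in> corth (kerpow A (j0 - 2))"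
      using proj_exists[OF kerpow_subspace[of A "j0 - 2"]] by blast
    define T where "T x = A *v x - P (A *v x)" for x
    have linT: "Vector_Spaces.linear (*s) (*s) T"
      unfolding Vector_Spaces.linear_iff T_def using vec.vector_space_axioms
      by (simp add: matrix_vector_right_distrib vector_scalar_commute Padd Pscl vec.scale_right_diff_distrib)
    have mhT: "module_hom (*s) (*s) T" using linT by (simp add: linear_iff_module_hom)
    have TU: "T x \<in> Uspace A j1" if "x \<in> Uspace A j0" for x
    proof -
      have "A *v x \<in> kerpow A j1" using A_U[of j0 x A] that j0 unfolding Uspace_def j1_def by auto
      moreover have "P (A *v x) \<in> kerpow A j1" using kerpow_le[of "j0 - 2" j1 "P (A *v x)" A] PS[of "A *v x"] j0 j1_def by simp
      ultimately have "T x \<in> kerpow A j1" unfolding T_def using vec.subspace_diff[OF kerpow_subspace] by blast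
      moreover have "T x \<in> corth (kerpow A (j1 - 1))" using Porth unfolding T_def j1j0 .
      ultimately show ?thesis unfolding Uspace_def by auto
    qed
    define w where "w k = T (ub k)" for k
    have indep: "\<forall>k\<in>{1..r}. w k \<notin> vec.span (w ` {1..<k})"
    proof (intro ballI notI)
      fix k assume k: "k \<in> {1..r}" and wk: "w k \<in> vec.span (w ` {1..<k})"
      have "w ` {1..<k} = T ` (ub ` {1..<k})" unfolding w_def by auto
      then have "vec.span (w ` {1..<k}) = T ` vec.span (ub ` {1..<k})"
        using module_hom.span_image[OF mhT] by simp
      then obtain z where z: "z \<in> vec.span (ub ` {1..<k})" "T z = w k" using wk by auto
      define q where "q = ub k - z"
      have Tq: "T q = 0" unfolding q_def using module_hom.diff[OF mhT] z(2) w_def by simp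
      have sub: "ub ` {1..<k} \<subseteq> Uspace A j0" using ubU k by auto
      have zU: "z \<in> Uspace A j0" using vec.span_minimal[OF sub Uspace_subspace] z(1) by auto
      have "ub k \<in> Uspace A j0" using ubU k by auto
      then have qU: "q \<in> Uspace A j0" using vec.subspace_diff[OF Uspace_subspace] zU q_def by auto
      have "A *v q = P (A *v q)" using Tq unfolding T_def by simp
      then have "A *v q \<in> kerpow A (j0 - 2)" using PS by metis
      then have "q = 0" using key_zero[OF j0(1) qU] by simp
      then have "ub k = z" unfolding q_def by simp
      moreover have "vec.span (ub ` {1..<k}) \<subseteq> vec.span (ub ` ({1..r} - {k}))"
        by (rule vec.span_mono) (use k in auto)
      ultimately have "ub k \<in> vec.span (ub ` ({1..r} - {k}))" using z(1) by auto
      with onb_notin_span[OF ob k] show False by simp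
    qed
    obtain v where ov: "onb v r" and spv: "\<forall>k\<le>r. vec.span (v ` {1..k}) = vec.span (w ` {1..k})"
      and civ: "\<forall>k\<in>{1..r}. cinner (w k) (v k) \<noteq> 0"
      using gs_prefix[OF indep] by blast
    have wU: "w ` {1..r} \<subseteq> Uspace A j1" using TU ubU unfolding w_def by auto
    have vU: "v ` {1..r} \<subseteq> Uspace A j1"
    proof -
      have "v ` {1..r} \<subseteq> vec.span (v ` {1..r})" by (rule vec.span_superset)
      also have "\<dots> = vec.span (w ` {1..r})" using spv by simp
      also have "\<dots> \<subseteq> Uspace A j1" using vec.span_minimal[OF wU Uspace_subspace] .
      finally show ?thesis .
    qed
    from onb_extend[OF Uspace_subspace ov vU] obtain v' where v'v: "\<forall>i\<in>{1..r}. v' i = v i"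
      and ov': "onb v' (d j1)" and spv': "vec.span (v' ` {1..d j1}) = Uspace A j1"
      unfolding d_def by auto
    have rle: "r \<le> d j1" using onb_le_dim[OF ov vU] d_def by simp
    define u' where "u' = u(j1 := v')"
    have "Q j1 u'"
      unfolding Q_def
    proof (rule conjI; intro ballI)
      fix j assume j: "j \<in> {j1..m}"
      show "onb (u' j) (d j) \<and> vec.span (u' j ` {1..d j}) = Uspace A j"
      proof (cases "j = j1")
        case True then show ?thesis using ov' spv' u'_def by simp
      next
        case False
        then have "j \<in> {j0..m}" using j j1j0 by auto
        then show ?thesis using Qu False unfolding Q_def u'_def by auto
      qed
    next
      fix j k assume j: "j \<in> {Suc j1..m}" and k: "k \<in> {1..d j}"
      show "k \<le> d (j - 1) \<and> A *v u' j k \<in> orth_sum (vec.span (u' (j - 1) ` {1..k})) (kerpow A (j - 2))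
        \<and> cinner (A *v u' j k) (u' (j - 1) k) \<noteq> 0"
      proof (cases "j = j0")
        case True
        have e1: "u' j = ub" "u' (j - 1) = v'" using True u'_def ub_def j1_def j0 by auto
        have kr: "k \<in> {1..r}" using k True r_def by simp
        have "v' ` {1..k} = v ` {1..k}" using v'v kr by (intro image_cong) auto
        then have spk: "vec.span (v' ` {1..k}) = vec.span (w ` {1..k})" using spv kr by simp
        have wk: "w k \<in> vec.span (w ` {1..k})" using kr by (intro vec.span_base) auto
        have AT: "A *v ub k = w k + P (A *v ub k)" unfolding w_def T_def by simp
        have os: "A *v ub k \<in> orth_sum (vec.span (v' ` {1..k})) (kerpow A (j - 2))"
          unfolding orth_sum_def spk using AT wk PS True by blast
        have "v k \<in> Uspace A j1" using vU kr by auto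
        then have "v k \<in> corth (kerpow A (j0 - 2))" unfolding Uspace_def j1j0 by simp
        then have "cinner (v k) (P (A *v ub k)) = 0" using PS unfolding corth_def by simp
        then have "cinner (P (A *v ub k)) (v k) = 0" using cinner_cnj[of "P (A *v ub k)" "v k"] by simp
        moreover have "cinner (A *v ub k) (v k) = cinner (w k + P (A *v ub k)) (v k)"
          by (rule arg_cong[where f="\<lambda>z. cinner z (v k)", OF AT])
        ultimately have "cinner (A *v ub k) (v' k) \<noteq> 0"
          using civ kr v'v by (simp add: cinner_add_left)
        with os show ?thesis using e1 rle kr True j1_def by simp
      next
        case False
        then have jj: "j \<in> {Suc j0..m}" using j j1j0 by auto
        then have "u' j = u j" "u' (j - 1) = u (j - 1)" using u'_def j1j0 by auto
        then show ?thesis using Qu jj k unfolding Q_def by simp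
      qed
    qed
    then show ?case using mj1 by auto
  qed
  have "m - (m - 1) = 1" using assms(1) by simp
  then obtain u where "Q 1 u" using main[of "m - 1"] assms(1) by auto
  moreover have "{Suc 1..m} = {2..m}" by simp
  ultimately show ?thesis unfolding Q_def onb_def d_def by metis
qed

end
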